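(* Let $\Gamma$ be a countable group and $c\in\mathrm Z^2(\Gamma,\mathbb R)$. For $r\in\mathbb R$ let $c_r=\exp(irc)\in\mathrm Z^2(\Gamma,\mathbb T)$. If $c_r\in\mathrm B^2(\Gamma,\mathbb T)$ for every $r\in\mathbb R$, then $c\in\mathrm B^2(\Gamma,\mathbb R)$.
   Context: $\mathbb R$ and $\mathbb T$ carry the trivial $\Gamma$-action; $\mathrm Z^2$ and $\mathrm B^2$ denote group 2-cocycles ($c(g,h)+c(gh,k)=c(g,hk)+c(h,k)$) and 2-coboundaries ($c(g,h)=b(g)+b(h)-b(gh)$, multiplicatively for $\mathbb T$). *)

theory Defs
  imports Complex_Main "HOL-Algebra.Group" "HOL-Library.Countable_Set"
begin

definition real_cocycle2 :: "('g, 'b) monoid_scheme \<Rightarrow> ('g \<Rightarrow> 'g \<Rightarrow> real) \<Rightarrow> bool" where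
  "real_cocycle2 G c \<longleftrightarrow>
     (\<forall>g\<in>carrier G. \<forall>h\<in>carrier G. \<forall>k\<in>carrier G.
        c g h + c (g \<otimes>\<^bsub>G\<^esub> h) k = c g (h \<otimes>\<^bsub>G\<^esub> k) + c h k)"

definition real_coboundary2 :: "('g, 'b) monoid_scheme \<Rightarrow> ('g \<Rightarrow> 'g \<Rightarrow> real) \<Rightarrow> bool" where
  "real_coboundary2 G c \<longleftrightarrow>
     (\<exists>b :: 'g \<Rightarrow> real. \<forall>g\<in>carrier G. \<forall>h\<in>carrier G.
        c g h = b g + b h - b (g \<otimes>\<^bsub>G\<^esub> h))"

definition circle_coboundary2 :: "('g, 'b) monoid_scheme \<Rightarrow> ('g \<Rightarrow> 'g \<Rightarrow> complex) \<Rightarrow> bool" where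
  "circle_coboundary2 G w \<longleftrightarrow>
     (\<exists>b :: 'g \<Rightarrow> complex. (\<forall>g\<in>carrier G. cmod (b g) = 1) \<and>
        (\<forall>g\<in>carrier G. \<forall>h\<in>carrier G.
           w g h = b g * b h * inverse (b (g \<otimes>\<^bsub>G\<^esub> h))))"

end

theory Submission
  imports Defs "HOL-Library.Function_Algebras" "HOL-Analysis.Analysis"
begin

definition vv :: "('g, 'b) monoid_scheme \<Rightarrow> 'g \<Rightarrow> 'g \<Rightarrow> 'g \<Rightarrow> real" where
  "vv G g h = (\<lambda>x. (if x = g then 1 else 0) + (if x = h then 1 else 0)
      - (if x = g \<otimes>\<^bsub>G\<^esub> h then 1 else 0))"

lemma sum_fun_apply: "(sum f A) x = (\<Sum>a\<in>A. f a x)"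
  by (induction A rule: infinite_finite_induct) (auto simp: plus_fun_def zero_fun_def)

lemma vv_sum:
  assumes "finite X" "g \<in> X" "h \<in> X" "g \<otimes>\<^bsub>G\<^esub> h \<in> X"
  shows "(\<Sum>x\<in>X. vv G g h x * \<theta> x) = \<theta> g + \<theta> h - \<theta> (g \<otimes>\<^bsub>G\<^esub> h)"
proof -
  have "(\<Sum>x\<in>X. vv G g h x * \<theta> x) = (\<Sum>x\<in>X. (if x = g then \<theta> x else 0) + (if x = h then \<theta> x else 0)
      - (if x = g \<otimes>\<^bsub>G\<^esub> h then \<theta> x else 0))"
    by (rule sum.cong) (auto simp: vv_def)
  also have "\<dots> = \<theta> g + \<theta> h - \<theta> (g \<otimes>\<^bsub>G\<^esub> h)"
    using assms by (simp add: sum.distrib sum_subtractf sum.delta')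
  finally show ?thesis .
qed

lemma key:
  fixes a :: "'i \<Rightarrow> real" and q :: "'i \<Rightarrow> 'g \<times> 'g" and c :: "'g \<Rightarrow> 'g \<Rightarrow> real"
  assumes fin: "finite I"
    and eq0: "\<And>x. (\<Sum>i\<in>I. a i * vv G (fst (q i)) (snd (q i)) x) = 0"
    and hyp: "\<And>r. \<exists>\<theta>. \<forall>i\<in>I. \<exists>n::int. r * c (fst (q i)) (snd (q i)) - \<theta> (fst (q i))
                 - \<theta> (snd (q i)) + \<theta> (fst (q i) \<otimes>\<^bsub>G\<^esub> snd (q i)) = 2 * pi * of_int n"
  shows "(\<Sum>i\<in>I. a i * c (fst (q i)) (snd (q i))) = 0"
proof (rule ccontr)
  define s where "s = (\<Sum>i\<in>I. a i * c (fst (q i)) (snd (q i)))"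
  assume "(\<Sum>i\<in>I. a i * c (fst (q i)) (snd (q i))) \<noteq> 0"
  hence s0: "s \<noteq> 0" by (simp add: s_def)
  define X where "X = (\<Union>i\<in>I. {fst (q i), snd (q i), fst (q i) \<otimes>\<^bsub>G\<^esub> snd (q i)})"
  have finX: "finite X" using fin by (simp add: X_def)
  have T: "(\<Sum>i\<in>I. a i * (\<theta> (fst (q i)) + \<theta> (snd (q i)) - \<theta> (fst (q i) \<otimes>\<^bsub>G\<^esub> snd (q i)))) = 0"
    for \<theta> :: "'g \<Rightarrow> real"
  proof -
    have "(\<Sum>i\<in>I. a i * (\<theta> (fst (q i)) + \<theta> (snd (q i)) - \<theta> (fst (q i) \<otimes>\<^bsub>G\<^esub> snd (q i))))
       = (\<Sum>i\<in>I. a i * (\<Sum>x\<in>X. vv G (fst (q i)) (snd (q i)) x * \<theta> x))"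
      by (rule sum.cong[OF refl], subst vv_sum) (use finX in \<open>auto simp: X_def\<close>)
    also have "\<dots> = (\<Sum>x\<in>X. \<theta> x * (\<Sum>i\<in>I. a i * vv G (fst (q i)) (snd (q i)) x))"
      by (simp add: sum_distrib_left sum_distrib_right sum.swap[of _ I X] algebra_simps)
    also have "\<dots> = 0" by (simp add: eq0)
    finally show ?thesis .
  qed
  define A where "A = (\<lambda>n. \<Sum>i\<in>I. a i * (2 * pi * of_int (n i))) ` (I \<rightarrow>\<^sub>E (UNIV :: int set))"
  have cA: "countable A" unfolding A_def
    by (intro countable_image countable_PiE fin) auto
  have "r * s \<in> A" for r
  proof -
    obtain \<theta> where th: "\<forall>i\<in>I. \<exists>n::int. r * c (fst (q i)) (snd (q i)) - \<theta> (fst (q i))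
                 - \<theta> (snd (q i)) + \<theta> (fst (q i) \<otimes>\<^bsub>G\<^esub> snd (q i)) = 2 * pi * of_int n"
      using hyp by blast
    then obtain n where n: "\<forall>i\<in>I. r * c (fst (q i)) (snd (q i)) - \<theta> (fst (q i))
                 - \<theta> (snd (q i)) + \<theta> (fst (q i) \<otimes>\<^bsub>G\<^esub> snd (q i)) = 2 * pi * of_int (n i)"
      by metis
    have "r * s = (\<Sum>i\<in>I. a i * (r * c (fst (q i)) (snd (q i))))"
      by (simp add: s_def sum_distrib_left algebra_simps)
    also have "\<dots> = (\<Sum>i\<in>I. a i * (2 * pi * of_int (n i)) + a i * (\<theta> (fst (q i)) + \<theta> (snd (q i)) - \<theta> (fst (q i) \<otimes>\<^bsub>G\<^esub> snd (q i))))"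
    proof (rule sum.cong[OF refl])
      fix i assume "i \<in> I"
      hence "r * c (fst (q i)) (snd (q i)) = 2 * pi * of_int (n i) + (\<theta> (fst (q i)) + \<theta> (snd (q i)) - \<theta> (fst (q i) \<otimes>\<^bsub>G\<^esub> snd (q i)))"
        using n by (auto simp: algebra_simps)
      thus "a i * (r * c (fst (q i)) (snd (q i))) = a i * (2 * pi * of_int (n i)) + a i * (\<theta> (fst (q i)) + \<theta> (snd (q i)) - \<theta> (fst (q i) \<otimes>\<^bsub>G\<^esub> snd (q i)))"
        by (metis distrib_left)
    qed
    also have "\<dots> = (\<Sum>i\<in>I. a i * (2 * pi * of_int (restrict n I i)))"
      by (simp add: sum.distrib T)
    finally show ?thesis unfolding A_def by (intro image_eqI[of _ _ "restrict n I"]) auto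
  qed
  hence "UNIV \<subseteq> (\<lambda>y. y / s) ` A"
    using s0 by (auto intro!: image_eqI[of _ "\<lambda>y. y / s"])
  hence "countable (UNIV :: real set)"
    using cA by (meson countable_image countable_subset)
  thus False using uncountable_UNIV_real by blast
qed

lemma hyp_angle:
  assumes grp: "group G" and "circle_coboundary2 G (\<lambda>g h. exp (\<i> * complex_of_real (r * c g h)))"
  shows "\<exists>\<theta>. \<forall>g\<in>carrier G. \<forall>h\<in>carrier G. \<exists>n::int.
           r * c g h - \<theta> g - \<theta> h + \<theta> (g \<otimes>\<^bsub>G\<^esub> h) = 2 * pi * of_int n"
proof -
  obtain b where b1: "\<forall>g\<in>carrier G. cmod (b g) = 1"
    and bw: "\<forall>g\<in>carrier G. \<forall>h\<in>carrier G.
           exp (\<i> * complex_of_real (r * c g h)) = b g * b h * inverse (b (g \<otimes>\<^bsub>G\<^esub> h))"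
    using assms(2) unfolding circle_coboundary2_def by blast
  define \<theta> where "\<theta> x = Arg (b x)" for x
  have be: "b x = exp (\<i> * complex_of_real (\<theta> x))" if "x \<in> carrier G" for x
  proof -
    have "b x \<noteq> 0" using b1 that by auto
    hence "cis (Arg (b x)) = sgn (b x)" by (rule cis_Arg)
    also have "\<dots> = b x" using b1 that by (simp add: sgn_eq)
    finally show ?thesis by (simp add: \<theta>_def cis_conv_exp)
  qed
  show ?thesis
  proof (rule exI[of _ \<theta>], intro ballI)
    fix g h assume g: "g \<in> carrier G" and h: "h \<in> carrier G"
    define z where "z = \<i> * complex_of_real (r * c g h - \<theta> g - \<theta> h + \<theta> (g \<otimes>\<^bsub>G\<^esub> h))"
    have gh: "g \<otimes>\<^bsub>G\<^esub> h \<in> carrier G"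
      using grp g h by (simp add: group.is_monoid monoid.m_closed)
    have "exp z = exp (\<i> * complex_of_real (r * c g h)) * inverse (exp (\<i> * complex_of_real (\<theta> g)))
        * inverse (exp (\<i> * complex_of_real (\<theta> h))) * exp (\<i> * complex_of_real (\<theta> (g \<otimes>\<^bsub>G\<^esub> h)))"
      unfolding z_def by (simp add: algebra_simps exp_add exp_diff exp_minus field_simps)
    also have "\<dots> = 1"
      using bw g h gh be[OF g] be[OF h] be[OF gh] b1
      by (auto simp: field_simps)
    finally have "exp z = 1" .
    then obtain n :: int where "Im z = of_int (2 * n) * pi"
      using exp_eq_1[of z] by blast
    thus "\<exists>n::int. r * c g h - \<theta> g - \<theta> h + \<theta> (g \<otimes>\<^bsub>G\<^esub> h) = 2 * pi * of_int n"
      by (intro exI[of _ n]) (simp add: z_def)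
  qed
qed

theorem corollary6p2:
  fixes G :: "('g, 'b) monoid_scheme" and c :: "'g \<Rightarrow> 'g \<Rightarrow> real"
  assumes "group G"
    and "countable (carrier G)"
    and "real_cocycle2 G c"
    and "\<forall>r::real. circle_coboundary2 G (\<lambda>g h. exp (\<i> * complex_of_real (r * c g h)))"
  shows "real_coboundary2 G c"
proof -
  have hyp: "\<And>r. \<exists>\<theta>. \<forall>g\<in>carrier G. \<forall>h\<in>carrier G. \<exists>n::int.
           r * c g h - \<theta> g - \<theta> h + \<theta> (g \<otimes>\<^bsub>G\<^esub> h) = 2 * pi * of_int n"
    using hyp_angle[OF assms(1)] assms(4) by blast
  define sc where "sc = (\<lambda>(r::real) (f::'g \<Rightarrow> real) x. r * f x)"
  interpret vs: vector_space sc
    by unfold_locales (auto simp: sc_def fun_eq_iff algebra_simps)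
  interpret vsr: vector_space "(*) :: real \<Rightarrow> real \<Rightarrow> real"
    by unfold_locales (auto simp: algebra_simps)
  interpret vp: vector_space_pair sc "(*) :: real \<Rightarrow> real \<Rightarrow> real" ..
  define V where "V = {vv G g h | g h. g \<in> carrier G \<and> h \<in> carrier G}"
  obtain B where BV: "B \<subseteq> V" and indB: "vs.independent B" and VB: "V \<subseteq> vs.span B"
    using vs.maximal_independent_subset[of V] by blast
  define pk where "pk b = (SOME p. p \<in> carrier G \<times> carrier G \<and> b = vv G (fst p) (snd p))" for b
  have pk: "pk b \<in> carrier G \<times> carrier G \<and> b = vv G (fst (pk b)) (snd (pk b))" if "b \<in> B" for b
  proof -
    have "\<exists>p. p \<in> carrier G \<times> carrier G \<and> b = vv G (fst p) (snd p)"
      using that BV unfolding V_def by fastforce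
    thus ?thesis unfolding pk_def by (rule someI_ex)
  qed
  define L where "L = vp.construct B (\<lambda>b. c (fst (pk b)) (snd (pk b)))"
  have linL: "Vector_Spaces.linear sc (*) L" unfolding L_def by (rule vp.linear_construct[OF indB])
  have LB: "L b = c (fst (pk b)) (snd (pk b))" if "b \<in> B" for b
    unfolding L_def by (rule vp.construct_basis[OF indB that])
  define \<beta> where "\<beta> x = L (\<lambda>y. if y = x then 1 else 0)" for x
  show ?thesis unfolding real_coboundary2_def
  proof (rule exI[of _ \<beta>], intro ballI)
    fix g h assume g: "g \<in> carrier G" and h: "h \<in> carrier G"
    have "vv G g h = (\<lambda>y. if y = g then 1 else 0) + (\<lambda>y. if y = h then 1 else 0)
                     - (\<lambda>y. if y = g \<otimes>\<^bsub>G\<^esub> h then 1 else 0)"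
      by (simp add: vv_def fun_eq_iff)
    hence Lv: "L (vv G g h) = \<beta> g + \<beta> h - \<beta> (g \<otimes>\<^bsub>G\<^esub> h)"
      using linL by (simp add: \<beta>_def vp.linear_add[OF linL] vp.linear_diff[OF linL])
    have "vv G g h \<in> vs.span B" using VB g h by (auto simp: V_def)
    then obtain t r where t: "finite t" "t \<subseteq> B" and vt: "vv G g h = (\<Sum>b\<in>t. sc (r b) b)"
      unfolding vs.span_explicit by blast
    have "L (vv G g h) = (\<Sum>b\<in>t. r b * L b)"
      using linL by (simp add: vt vp.linear_sum[OF linL] vp.linear_scale[OF linL])
    also have "\<dots> = (\<Sum>b\<in>t. r b * c (fst (pk b)) (snd (pk b)))"
      using t LB by (auto intro!: sum.cong)
    also have "\<dots> = c g h"
    proof -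
      define I where "I = insert None (Some ` t)"
      define q where "q i = (case i of None \<Rightarrow> (g, h) | Some b \<Rightarrow> pk b)" for i
      define a where "a i = (case i of None \<Rightarrow> 1 | Some b \<Rightarrow> - r b)" for i
      have sumI: "(\<Sum>i\<in>I. F i) = F None + (\<Sum>b\<in>t. F (Some b))" for F :: "('g \<Rightarrow> real) option \<Rightarrow> real"
        unfolding I_def using t(1) by (simp add: sum.reindex)
      have "(\<Sum>i\<in>I. a i * c (fst (q i)) (snd (q i))) = 0"
      proof (rule key)
        show "finite I" using t(1) by (simp add: I_def)
        fix x
        have "vv G g h x = (\<Sum>b\<in>t. r b * b x)"
          by (simp add: vt sum_fun_apply sc_def)
        also have "\<dots> = (\<Sum>b\<in>t. r b * vv G (fst (pk b)) (snd (pk b)) x)"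
          using t pk by (auto intro!: sum.cong)
        finally show "(\<Sum>i\<in>I. a i * vv G (fst (q i)) (snd (q i)) x) = 0"
          by (simp add: sumI a_def q_def sum_negf)
      next
        fix r'
        obtain \<theta> where th: "\<forall>g\<in>carrier G. \<forall>h\<in>carrier G. \<exists>n::int.
           r' * c g h - \<theta> g - \<theta> h + \<theta> (g \<otimes>\<^bsub>G\<^esub> h) = 2 * pi * of_int n"
          using hyp by blast
        have qc: "q i \<in> carrier G \<times> carrier G" if "i \<in> I" for i
          using that g h t pk by (auto simp: I_def q_def)
        show "\<exists>\<theta>. \<forall>i\<in>I. \<exists>n::int. r' * c (fst (q i)) (snd (q i)) - \<theta> (fst (q i))
                 - \<theta> (snd (q i)) + \<theta> (fst (q i) \<otimes>\<^bsub>G\<^esub> snd (q i)) = 2 * pi * of_int n"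
        proof (rule exI[of _ \<theta>], intro ballI)
          fix i assume "i \<in> I"
          hence "fst (q i) \<in> carrier G" "snd (q i) \<in> carrier G" using qc[of i] by (auto simp: mem_Times_iff)
          thus "\<exists>n::int. r' * c (fst (q i)) (snd (q i)) - \<theta> (fst (q i))
                 - \<theta> (snd (q i)) + \<theta> (fst (q i) \<otimes>\<^bsub>G\<^esub> snd (q i)) = 2 * pi * of_int n"
            using th by blast
        qed
      qed
      thus ?thesis by (simp add: sumI a_def q_def sum_negf)
    qed
    finally show "c g h = \<beta> g + \<beta> h - \<beta> (g \<otimes>\<^bsub>G\<^esub> h)" using Lv by simp
  qed
qed

end
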